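(* Let $A,C$ be logically independent events. (a) If $P(C)=1$, $P(C|A)=1$ and $P(C|\bar A)<1$ in a coherent assessment, then $P(A)=1$. (b) The family $\{C, C|A\}$ does not p-entail $A$, and the iterated conditional $A\,|\,(C\wedge(C|A))$, defined as $A\wedge C\wedge(C|A)+\mu(1-C\wedge(C|A))$ with $\mu$ its prevision, is not identically equal to $1$: if $P(C|A)=1$, every $\mu\in[0,1]$ is coherent and the iterated conditional takes value $1$ on $AC$, $0$ on $\bar AC$, and $\mu$ on $\bar C$. *)

theory Defs
  imports Complex_Main
begin

definition ind :: "'w set \<Rightarrow> 'w \<Rightarrow> real" where
  "ind E w = (if w \<in> E then 1 else 0)"

definition logically_independent :: "'w set \<Rightarrow> 'w set \<Rightarrow> bool" where
  "logically_independent A C \<longleftrightarrow>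
     A \<inter> C \<noteq> {} \<and> A - C \<noteq> {} \<and> C - A \<noteq> {} \<and> - (A \<union> C) \<noteq> {}"

(* The conditional event E|H as a random quantity, given P(E|H) = p:
   E|H = EH + p (not H). *)
definition cevent :: "'w set \<Rightarrow> 'w set \<Rightarrow> real \<Rightarrow> 'w \<Rightarrow> real" where
  "cevent E H p = (\<lambda>w. if w \<in> H then ind E w else p)"

(* An item of an assessment: (conditioning event H, conditional random quantity Z,
   assessed prevision mu).  Betting on it with stake s yields the gain s*(Z - mu),
   which is 0 where the bet is called off (outside H). *)
type_synonym 'w item = "'w set \<times> ('w \<Rightarrow> real) \<times> real"

definition ce_item :: "'w set \<Rightarrow> 'w set \<Rightarrow> real \<Rightarrow> 'w item" where
  "ce_item E H p = (H, cevent E H p, p)"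

definition coherent :: "'w item list \<Rightarrow> bool" where
  "coherent F \<longleftrightarrow>
     (\<forall>J. J \<subseteq> {..<length F} \<and> J \<noteq> {} \<longrightarrow>
        (\<forall>s :: nat \<Rightarrow> real. \<exists>w \<in> (\<Union>i\<in>J. fst (F ! i)).
            (\<Sum>i\<in>J. s i * (fst (snd (F ! i)) w - snd (snd (F ! i)))) \<ge> 0))"

(* a family of conditional events is a list of pairs (E, H) standing for E|H *)
definition p_consistent :: "('w set \<times> 'w set) list \<Rightarrow> bool" where
  "p_consistent F \<longleftrightarrow> coherent (map (\<lambda>(E, H). ce_item E H 1) F)"

definition p_entails :: "('w set \<times> 'w set) list \<Rightarrow> 'w set \<times> 'w set \<Rightarrow> bool" where
  "p_entails F G \<longleftrightarrow> p_consistent F \<and>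
     (\<forall>ps p. length ps = length F \<and>
        coherent (map (\<lambda>((E, H), q). ce_item E H q) (zip F ps) @ [ce_item (fst G) (snd G) p]) \<and>
        (\<forall>q \<in> set ps. q = 1) \<longrightarrow> p = 1)"

(* Conjunction C \<and> (C|A) of the event C with the conditional event C|A, where
   P(C|A) = y:  C \<and> (C|A) = C * (C|A) = AC + y (not A) C. *)
definition conj_C_CA :: "'w set \<Rightarrow> 'w set \<Rightarrow> real \<Rightarrow> 'w \<Rightarrow> real" where
  "conj_C_CA A C y = (\<lambda>w. ind C w * cevent C A y w)"

definition iter_cond :: "'w set \<Rightarrow> ('w \<Rightarrow> real) \<Rightarrow> real \<Rightarrow> 'w \<Rightarrow> real" where
  "iter_cond A Y mu = (\<lambda>w. ind A w * Y w + mu * (1 - Y w))"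

definition iter_item :: "'w set \<Rightarrow> ('w \<Rightarrow> real) \<Rightarrow> real \<Rightarrow> 'w item" where
  "iter_item A Y mu = ({w. Y w \<noteq> 0}, iter_cond A Y mu, mu)"

end

theory Submission
  imports Defs
begin

lemma sum_restrict_n:
  fixes J :: "nat set" and g :: "nat \<Rightarrow> 'a::comm_monoid_add"
  assumes "J \<subseteq> {..<n}"
  shows "sum g J = (\<Sum>i<n. if i \<in> J then g i else 0)"
proof -
  have "sum g J = sum g ({..<n} \<inter> J)" using assms by (simp add: Int_absorb1)
  also have "\<dots> = (\<Sum>i<n. if i \<in> J then g i else 0)"
    using sum.inter_restrict[of "{..<n}" g J] by simp
  finally show ?thesis .
qed

lemma partA:
  assumes indep: "logically_independent A C" and "x < 1"
    and coh: "coherent [ce_item C UNIV 1, ce_item C A 1, ce_item C (- A) x, ce_item A UNIV a]"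
  shows "a = 1"
proof (rule ccontr)
  assume na: "a \<noteq> 1"
  let ?F = "[ce_item C UNIV 1, ce_item C A 1, ce_item C (- A) x, ce_item A UNIV a]"
  define J :: "nat set" where "J = {0,1,2,3}"
  define K :: real where "K = \<bar>x\<bar> * (\<bar>a\<bar> + 1) / (1 - x) + \<bar>a\<bar> + 1"
  define s :: "nat \<Rightarrow> real" where
    "s = (if a < 1 then (\<lambda>i. if i = 0 then K else if i = 2 then - (\<bar>a\<bar> + 1) / (1 - x)
            else if i = 3 then -1 else 0)
          else (\<lambda>i. if i = 3 then 1 else 0))"
  have "J \<subseteq> {..<length ?F} \<and> J \<noteq> {}" by (auto simp: J_def)
  then obtain w where "(\<Sum>i\<in>J. s i * (fst (snd (?F ! i)) w - snd (snd (?F ! i)))) \<ge> 0"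
    using coh unfolding coherent_def by blast
  hence g: "s 0 * (ind C w - 1) + s 1 * (cevent C A 1 w - 1) + s 2 * (cevent C (-A) x w - x)
      + s 3 * (ind A w - a) \<ge> 0"
    by (simp add: J_def ce_item_def cevent_def algebra_simps)
  have x1: "1 - x > 0" using assms by simp
  have K0: "\<bar>x\<bar> * (\<bar>a\<bar> + 1) / (1 - x) \<ge> 0" using x1 by simp
  have Kx: "x * (\<bar>a\<bar> + 1) / (1 - x) \<le> \<bar>x\<bar> * (\<bar>a\<bar> + 1) / (1 - x)"
    using x1 by (intro divide_right_mono mult_right_mono) auto
  have e2: "- (\<bar>a\<bar> + 1) / (1 - x) * (1 - x) = - (\<bar>a\<bar> + 1)" using x1 by simp
  have e4: "(- \<bar>a\<bar> - 1) * x / (1 - x) = - (x * (\<bar>a\<bar> + 1) / (1 - x))" by (cases "x = 1") (simp_all add: field_simps)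
  have aa: "a \<le> \<bar>a\<bar>" by simp
  have e3: "- (\<bar>a\<bar> + 1) / (1 - x) * (0 - x) = x * (\<bar>a\<bar> + 1) / (1 - x)" using x1
    by (simp add: field_simps)
  show False
  proof (cases "a < 1")
    case True
    show ?thesis
    proof (cases "w \<in> A")
      case True
      then show ?thesis using g \<open>a<1\<close> K0 by (cases "w \<in> C") (auto simp: s_def cevent_def ind_def K_def)
    next
      case False
      then show ?thesis using g \<open>a<1\<close> K0 Kx e2 e3 e4 aa
        by (cases "w \<in> C") (auto simp: s_def cevent_def ind_def K_def)
    qed
  next
    case False
    then have "a > 1" using na by simp
    then show ?thesis using g by (cases "w \<in> A"; cases "w \<in> C") (auto simp: s_def cevent_def ind_def)
  qed
qed

lemma partB:
  assumes indep: "logically_independent A C"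
  shows "\<not> p_entails [(C, UNIV), (C, A)] (A, UNIV)"
proof -
  let ?F = "[ce_item C UNIV 1, ce_item C A 1, ce_item A UNIV (0::real)]"
  obtain w0 where w0: "w0 \<in> C" "w0 \<notin> A" using indep unfolding logically_independent_def by blast
  obtain w1 where w1: "w1 \<in> C" "w1 \<in> A" using indep unfolding logically_independent_def by blast
  have coh: "coherent ?F"
    unfolding coherent_def
  proof (intro allI impI)
    fix J :: "nat set" and s :: "nat \<Rightarrow> real"
    assume J: "J \<subseteq> {..<length ?F} \<and> J \<noteq> {}"
    show "\<exists>w \<in> (\<Union>i\<in>J. fst (?F ! i)).
            (\<Sum>i\<in>J. s i * (fst (snd (?F ! i)) w - snd (snd (?F ! i)))) \<ge> 0"
    proof (cases "0 \<in> J \<or> 2 \<in> J")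
      case True
      have "fst (?F!0) = UNIV" "fst (?F!2) = UNIV" by (simp_all add: ce_item_def numeral_2_eq_2)
      then have "w0 \<in> (\<Union>i\<in>J. fst (?F ! i))" using True by blast
      moreover have "(\<Sum>i\<in>J. s i * (fst (snd (?F ! i)) w0 - snd (snd (?F ! i)))) = 0"
      proof (rule sum.neutral, intro ballI)
        fix i assume "i \<in> J"
        then have "i < 3" using J by auto
        then have "i = 0 \<or> i = 1 \<or> i = 2" by auto
        then show "s i * (fst (snd (?F ! i)) w0 - snd (snd (?F ! i))) = 0"
          using w0 by (auto simp: ce_item_def cevent_def ind_def)
      qed
      ultimately show ?thesis by force
    next
      case False
      have "J \<subseteq> {1}"
      proof
        fix i assume "i \<in> J"
        then have "i < 3" using J by auto
        then have "i = 0 \<or> i = 1 \<or> i = 2" by auto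
        then show "i \<in> {1}" using False \<open>i \<in> J\<close> by auto
      qed
      then have J1: "J = {1}" using J by blast
      show ?thesis using w1 by (auto simp: J1 ce_item_def cevent_def ind_def)
    qed
  qed
  show ?thesis unfolding p_entails_def
  proof
    assume H: "p_consistent [(C, UNIV), (C, A)] \<and>
     (\<forall>ps p. length ps = length [(C, UNIV), (C, A)] \<and>
        coherent (map (\<lambda>((E, H), q). ce_item E H q) (zip [(C, UNIV), (C, A)] ps) @ [ce_item (fst (A, UNIV)) (snd (A, UNIV)) p]) \<and>
        (\<forall>q \<in> set ps. q = 1) \<longrightarrow> p = 1)"
    have "(0::real) = 1"
      using H[THEN conjunct2, rule_format, of "[1,1]" 0] coh by simp
    then show False by simp
  qed
qed

lemma Y_eq: "conj_C_CA A C 1 = ind C"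
  by (auto simp: conj_C_CA_def cevent_def ind_def)

lemma partC:
  assumes indep: "logically_independent A C" and mu: "mu \<in> {0..(1::real)}"
  shows "coherent [ce_item C A 1, iter_item A (conj_C_CA A C 1) mu]"
    and "\<forall>w. iter_cond A (conj_C_CA A C 1) mu w =
              (if w \<in> A \<inter> C then 1 else if w \<in> C then 0 else mu)"
proof -
  show "\<forall>w. iter_cond A (conj_C_CA A C 1) mu w =
              (if w \<in> A \<inter> C then 1 else if w \<in> C then 0 else mu)"
    by (auto simp: Y_eq iter_cond_def ind_def)
  obtain w0 where w0: "w0 \<in> C" "w0 \<notin> A" using indep unfolding logically_independent_def by blast
  obtain w1 where w1: "w1 \<in> C" "w1 \<in> A" using indep unfolding logically_independent_def by blast
  let ?F = "[ce_item C A 1, iter_item A (conj_C_CA A C 1) mu]"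
  show "coherent ?F"
    unfolding coherent_def
  proof (intro allI impI)
    fix J :: "nat set" and s :: "nat \<Rightarrow> real"
    assume J: "J \<subseteq> {..<length ?F} \<and> J \<noteq> {}"
    have J2: "J \<subseteq> {..<2}" using J by (simp add: numeral_2_eq_2)
    have sumJ: "\<And>g. sum g J = (if 0 \<in> J then g 0 else 0) + (if 1 \<in> J then g 1 else 0)"
      unfolding sum_restrict_n[OF J2] by (simp add: numeral_2_eq_2)
    show "\<exists>w \<in> (\<Union>i\<in>J. fst (?F ! i)).
            (\<Sum>i\<in>J. s i * (fst (snd (?F ! i)) w - snd (snd (?F ! i)))) \<ge> 0"
    proof (cases "1 \<in> J")
      case True
      have "fst (?F!1) = C" by (simp add: iter_item_def Y_eq ind_def)
      then have m: "w1 \<in> (\<Union>i\<in>J. fst (?F ! i))" "w0 \<in> (\<Union>i\<in>J. fst (?F ! i))"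
        using True w0 w1 by blast+
      show ?thesis
      proof (cases "s 1 \<ge> 0")
        case True
        then show ?thesis using \<open>1 \<in> J\<close> w1 mu
          by (intro bexI[of _ w1] m) (auto simp: sumJ ce_item_def cevent_def ind_def iter_item_def Y_eq iter_cond_def)
      next
        case False
        then have "s 1 * (0 - mu) \<ge> 0" using mu by (simp add: mult_nonpos_nonneg)
        then show ?thesis using \<open>1 \<in> J\<close> w0 mu False
          by (intro bexI[of _ w0] m) (auto simp: sumJ ce_item_def cevent_def ind_def iter_item_def Y_eq iter_cond_def)
      qed
    next
      case False
      then have "0 \<in> J" using J by (auto simp: less_Suc_eq)
      moreover have "fst (?F!0) = A" by (simp add: ce_item_def)
      ultimately have m: "w1 \<in> (\<Union>i\<in>J. fst (?F ! i))" using w1 by blast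
      then show ?thesis using False w1 \<open>0 \<in> J\<close>
        by (intro bexI[of _ w1] m) (auto simp: sumJ ce_item_def cevent_def ind_def)
    qed
  qed
qed

theorem mainTheorem13:
  fixes A C :: "'w set"
  assumes indep: "logically_independent A C"
  shows
    \<comment> \<open>(a)\<close>
    "(\<forall>x a. x < 1 \<longrightarrow>
        coherent [ce_item C UNIV 1, ce_item C A 1, ce_item C (- A) x] \<longrightarrow>
        coherent [ce_item C UNIV 1, ce_item C A 1, ce_item C (- A) x, ce_item A UNIV a] \<longrightarrow>
        a = 1)
   \<and>
    \<comment> \<open>(b) no p-entailment\<close>
    \<not> p_entails [(C, UNIV), (C, A)] (A, UNIV)
   \<and>
    \<comment> \<open>(b) iterated conditional, case P(C|A) = 1\<close>
    (\<forall>mu \<in> {0..1}.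
        coherent [ce_item C A 1, iter_item A (conj_C_CA A C 1) mu]
      \<and> (\<forall>w. iter_cond A (conj_C_CA A C 1) mu w =
              (if w \<in> A \<inter> C then 1 else if w \<in> C then 0 else mu)))
   \<and>
    (\<exists>mu \<in> {0..1}. coherent [ce_item C A 1, iter_item A (conj_C_CA A C 1) mu]
       \<and> \<not> (\<forall>w. iter_cond A (conj_C_CA A C 1) mu w = 1))"
proof -
  obtain w2 where w2: "w2 \<notin> C" using indep unfolding logically_independent_def by blast
  have "iter_cond A (conj_C_CA A C 1) 0 w2 = 0"
    using partC(2)[OF indep, of 0] w2 by simp
  then have "\<not> (\<forall>w. iter_cond A (conj_C_CA A C 1) 0 w = 1)" by force
  moreover have "coherent [ce_item C A 1, iter_item A (conj_C_CA A C 1) 0]"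
    using partC(1)[OF indep, of 0] by simp
  ultimately show ?thesis
    using partA[OF indep] partB[OF indep] partC[OF indep] by force
qed

end
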